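(* The variety $\mathsf{V}(S_{(4,424)})$ is the ai-semiring variety defined by the identities $x^2y\approx xy$, $xyz\approx yxz$, $xy\approx xy+y$, $x+yz\approx yx+yz$.
   Context: An ai-semiring is an algebra $(S,+,\cdot)$ with $(S,+)$ a semilattice, $(S,\cdot)$ a semigroup, and both distributive laws. $\mathsf{V}(S)$ is the variety generated by $S$; "the ai-semiring variety defined by identities $\Sigma$" is the class of all ai-semirings satisfying $\Sigma$. $S_{(4,424)}$ has carrier $\{1,2,3,4\}$; addition: $x+x=x$, $2+x=x$, $1+x=1$ for all $x$, $3+4=1$; multiplication (row $a$, column $b$ gives $a\cdot b$): row $1$: $1,3,3,1$; row $2$: $1,2,3,4$; row $3$: $1,3,3,1$; row $4$: $1,3,3,1$. *)

theory Defs
  imports Main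
begin

definition ai_semiring :: "'a set \<Rightarrow> ('a \<Rightarrow> 'a \<Rightarrow> 'a) \<Rightarrow> ('a \<Rightarrow> 'a \<Rightarrow> 'a) \<Rightarrow> bool" where
  "ai_semiring C p m \<longleftrightarrow>
     (\<forall>x\<in>C. \<forall>y\<in>C. p x y \<in> C \<and> m x y \<in> C) \<and>
     (\<forall>x\<in>C. \<forall>y\<in>C. \<forall>z\<in>C. p (p x y) z = p x (p y z)) \<and>
     (\<forall>x\<in>C. \<forall>y\<in>C. p x y = p y x) \<and>
     (\<forall>x\<in>C. p x x = x) \<and>
     (\<forall>x\<in>C. \<forall>y\<in>C. \<forall>z\<in>C. m (m x y) z = m x (m y z)) \<and>
     (\<forall>x\<in>C. \<forall>y\<in>C. \<forall>z\<in>C. m x (p y z) = p (m x y) (m x z)) \<and>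
     (\<forall>x\<in>C. \<forall>y\<in>C. \<forall>z\<in>C. m (p x y) z = p (m x z) (m y z))"

definition sat_Sigma :: "'a set \<Rightarrow> ('a \<Rightarrow> 'a \<Rightarrow> 'a) \<Rightarrow> ('a \<Rightarrow> 'a \<Rightarrow> 'a) \<Rightarrow> bool" where
  "sat_Sigma C p m \<longleftrightarrow>
     (\<forall>x\<in>C. \<forall>y\<in>C. m (m x x) y = m x y) \<and>
     (\<forall>x\<in>C. \<forall>y\<in>C. \<forall>z\<in>C. m (m x y) z = m (m y x) z) \<and>
     (\<forall>x\<in>C. \<forall>y\<in>C. m x y = p (m x y) y) \<and>
     (\<forall>x\<in>C. \<forall>y\<in>C. \<forall>z\<in>C. p x (m y z) = p (m y x) (m y z))"

definition S4_car :: "nat set" where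
  "S4_car = {1, 2, 3, 4}"

definition S4_add :: "nat \<Rightarrow> nat \<Rightarrow> nat" where
  "S4_add x y = (if x = y then x else if x = 2 then y else if y = 2 then x else 1)"

definition S4_mul :: "nat \<Rightarrow> nat \<Rightarrow> nat" where
  "S4_mul a b = (if a = 2 then b else if b = 2 \<or> b = 3 then 3 else 1)"

definition pow_car :: "('i \<Rightarrow> nat) set" where
  "pow_car = {f. \<forall>i. f i \<in> S4_car}"

definition pow_add :: "('i \<Rightarrow> nat) \<Rightarrow> ('i \<Rightarrow> nat) \<Rightarrow> ('i \<Rightarrow> nat)" where
  "pow_add f g = (\<lambda>i. S4_add (f i) (g i))"

definition pow_mul :: "('i \<Rightarrow> nat) \<Rightarrow> ('i \<Rightarrow> nat) \<Rightarrow> ('i \<Rightarrow> nat)" where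
  "pow_mul f g = (\<lambda>i. S4_mul (f i) (g i))"

text \<open>HSP-witness: B is a subalgebra of the power S^'i and h maps B homomorphically
  onto the algebra (C, p, m).  Thus (C,p,m) lies in HSP(S) = V(S).\<close>

definition HSP_witness ::
  "('i \<Rightarrow> nat) set \<Rightarrow> (('i \<Rightarrow> nat) \<Rightarrow> 'a) \<Rightarrow> 'a set \<Rightarrow> ('a \<Rightarrow> 'a \<Rightarrow> 'a) \<Rightarrow> ('a \<Rightarrow> 'a \<Rightarrow> 'a) \<Rightarrow> bool" where
  "HSP_witness B h C p m \<longleftrightarrow>
     B \<subseteq> pow_car \<and>
     (\<forall>f\<in>B. \<forall>g\<in>B. pow_add f g \<in> B \<and> pow_mul f g \<in> B) \<and>
     h ` B = C \<and>
     (\<forall>f\<in>B. \<forall>g\<in>B. h (pow_add f g) = p (h f) (h g) \<and> h (pow_mul f g) = m (h f) (h g))"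

end

theory Submission
  imports Defs
begin

lemma S4_cases: "a \<in> S4_car \<Longrightarrow> a = 1 \<or> a = 2 \<or> a = 3 \<or> a = 4"
  by (auto simp: S4_car_def)

lemma S4_cl: "a \<in> S4_car \<Longrightarrow> b \<in> S4_car \<Longrightarrow> S4_add a b \<in> S4_car \<and> S4_mul a b \<in> S4_car"
  unfolding S4_car_def by (auto simp: S4_add_def S4_mul_def)

lemma S4_ids0:
  "\<forall>a\<in>S4_car. \<forall>b\<in>S4_car. \<forall>c\<in>S4_car. S4_add (S4_add a b) c = S4_add a (S4_add b c) \<and>
    S4_add a b = S4_add b a \<and> S4_add a a = a \<and>
    S4_mul (S4_mul a b) c = S4_mul a (S4_mul b c) \<and>
    S4_mul a (S4_add b c) = S4_add (S4_mul a b) (S4_mul a c) \<and>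
    S4_mul (S4_add a b) c = S4_add (S4_mul a c) (S4_mul b c) \<and>
    S4_mul (S4_mul a a) b = S4_mul a b \<and>
    S4_mul (S4_mul a b) c = S4_mul (S4_mul b a) c \<and>
    S4_mul a b = S4_add (S4_mul a b) b \<and>
    S4_add a (S4_mul b c) = S4_add (S4_mul b a) (S4_mul b c)"
  unfolding S4_car_def by (simp add: S4_add_def S4_mul_def)

section \<open>Terms\<close>

datatype 'a trm = V 'a | Pl "'a trm" "'a trm" | Tm "'a trm" "'a trm"

fun ev :: "('b \<Rightarrow> 'b \<Rightarrow> 'b) \<Rightarrow> ('b \<Rightarrow> 'b \<Rightarrow> 'b) \<Rightarrow> ('a \<Rightarrow> 'b) \<Rightarrow> 'a trm \<Rightarrow> 'b" where
  "ev pp mm s (V a) = s a"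
| "ev pp mm s (Pl t1 t2) = pp (ev pp mm s t1) (ev pp mm s t2)"
| "ev pp mm s (Tm t1 t2) = mm (ev pp mm s t1) (ev pp mm s t2)"

fun vs :: "'a trm \<Rightarrow> 'a set" where
  "vs (V a) = {a}" | "vs (Pl t1 t2) = vs t1 \<union> vs t2" | "vs (Tm t1 t2) = vs t1 \<union> vs t2"

fun Uf :: "'a trm \<Rightarrow> 'a set" where
  "Uf (V a) = {}" | "Uf (Pl t1 t2) = Uf t1 \<union> Uf t2" | "Uf (Tm t1 t2) = vs t1 \<union> Uf t2"

fun Tf :: "'a trm \<Rightarrow> 'a set" where
  "Tf (V a) = {a}" | "Tf (Pl t1 t2) = Tf t1 \<union> Tf t2" | "Tf (Tm t1 t2) = Tf t2"

fun fl :: "'a trm \<Rightarrow> 'a trm" where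
  "fl (V a) = V a" | "fl (Pl t1 t2) = Pl (fl t1) (fl t2)" | "fl (Tm t1 t2) = Pl (fl t1) (fl t2)"

lemma vs_UT: "vs t = Uf t \<union> Tf t"
  by (induction t) auto

lemma vs_ne: "vs t \<noteq> {}"
  by (induction t) auto

lemma Tf_ne: "Tf t \<noteq> {}"
  by (induction t) auto

lemma fin_vs: "finite (vs t)"
  by (induction t) auto

lemma fl_props: "vs (fl t) = vs t" "Uf (fl t) = {}"
  by (induction t) auto

lemma ex_flat: "finite A \<Longrightarrow> A \<noteq> {} \<Longrightarrow> \<exists>Q. Uf Q = {} \<and> vs Q = A"
proof (induction A rule: finite_ne_induct)
  case (singleton x)
  then show ?case by (intro exI[of _ "V x"]) auto
next
  case (insert x F)
  then obtain Q where "Uf Q = {}" "vs Q = F" by blast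
  then show ?case by (intro exI[of _ "Pl (V x) Q"]) auto
qed

section \<open>Evaluation in S4 at point assignments\<close>

lemma ev_point:
  "ev S4_add S4_mul (\<lambda>a. if a = u then 4 else 2) t =
   (if u \<in> Uf t then (if u \<in> Tf t then 1 else 3) else (if u \<in> Tf t then 4 else 2))"
proof (induction t)
  case (V x)
  then show ?case by simp
next
  case (Pl t1 t2)
  then show ?case
    by (cases "u \<in> Uf t1"; cases "u \<in> Tf t1"; cases "u \<in> Uf t2"; cases "u \<in> Tf t2")
      (simp_all add: S4_add_def)
next
  case (Tm t1 t2)
  have "u \<in> vs t1 \<longleftrightarrow> u \<in> Uf t1 \<or> u \<in> Tf t1" by (simp add: vs_UT)
  with Tm show ?case
    by (cases "u \<in> Uf t1"; cases "u \<in> Tf t1"; cases "u \<in> Uf t2"; cases "u \<in> Tf t2")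
      (simp_all add: S4_mul_def)
qed

lemma sep:
  assumes "\<And>u. ev S4_add S4_mul (\<lambda>a. if a = u then 4 else 2) t1 =
                ev S4_add S4_mul (\<lambda>a. if a = u then 4 else 2) t2"
  shows "Uf t1 = Uf t2 \<and> Tf t1 = Tf t2"
proof -
  have "\<And>u. (u \<in> Uf t1 \<longleftrightarrow> u \<in> Uf t2) \<and> (u \<in> Tf t1 \<longleftrightarrow> u \<in> Tf t2)"
  proof -
    fix u show "(u \<in> Uf t1 \<longleftrightarrow> u \<in> Uf t2) \<and> (u \<in> Tf t1 \<longleftrightarrow> u \<in> Tf t2)"
      using assms[of u] unfolding ev_point by (auto split: if_splits)
  qed
  then show ?thesis by blast
qed

section \<open>Models of Sigma\<close>

locale SM =
  fixes C :: "'a set" and p m :: "'a \<Rightarrow> 'a \<Rightarrow> 'a"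
  assumes ai: "ai_semiring C p m" and sg: "sat_Sigma C p m"
begin

lemma clp[simp]: "x \<in> C \<Longrightarrow> y \<in> C \<Longrightarrow> p x y \<in> C"
  using ai unfolding ai_semiring_def by blast
lemma clm[simp]: "x \<in> C \<Longrightarrow> y \<in> C \<Longrightarrow> m x y \<in> C"
  using ai unfolding ai_semiring_def by blast
lemma pA: "x \<in> C \<Longrightarrow> y \<in> C \<Longrightarrow> z \<in> C \<Longrightarrow> p (p x y) z = p x (p y z)"
  using ai unfolding ai_semiring_def by blast
lemma pC: "x \<in> C \<Longrightarrow> y \<in> C \<Longrightarrow> p x y = p y x"
  using ai unfolding ai_semiring_def by blast
lemma pI: "x \<in> C \<Longrightarrow> p x x = x"
  using ai unfolding ai_semiring_def by blast
lemma mA: "x \<in> C \<Longrightarrow> y \<in> C \<Longrightarrow> z \<in> C \<Longrightarrow> m (m x y) z = m x (m y z)"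
  using ai unfolding ai_semiring_def by blast
lemma dL: "x \<in> C \<Longrightarrow> y \<in> C \<Longrightarrow> z \<in> C \<Longrightarrow> m x (p y z) = p (m x y) (m x z)"
  using ai unfolding ai_semiring_def by blast
lemma dR: "x \<in> C \<Longrightarrow> y \<in> C \<Longrightarrow> z \<in> C \<Longrightarrow> m (p x y) z = p (m x z) (m y z)"
  using ai unfolding ai_semiring_def by blast
lemma s2: "x \<in> C \<Longrightarrow> y \<in> C \<Longrightarrow> z \<in> C \<Longrightarrow> m (m x y) z = m (m y x) z"
  using sg unfolding sat_Sigma_def by blast
lemma s3: "x \<in> C \<Longrightarrow> y \<in> C \<Longrightarrow> m x y = p (m x y) y"
  using sg unfolding sat_Sigma_def by blast
lemma s4: "x \<in> C \<Longrightarrow> y \<in> C \<Longrightarrow> z \<in> C \<Longrightarrow> p x (m y z) = p (m y x) (m y z)"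
  using sg unfolding sat_Sigma_def by blast

lemma pLC: "x \<in> C \<Longrightarrow> y \<in> C \<Longrightarrow> z \<in> C \<Longrightarrow> p x (p y z) = p y (p x z)"
  by (metis pA pC)

lemmas pACI = pA pC pLC

lemma K: assumes "a \<in> C" "b \<in> C" "y \<in> C" shows "m a (m b y) = m (p a b) y"
proof -
  have "m (p a b) y = p (m a y) (m b y)" using assms by (simp add: dR)
  also have "\<dots> = p (m b (m a y)) (m b y)" using assms by (simp add: s4)
  also have "m b (m a y) = m a (m b y)" using assms by (metis mA s2)
  also have "p (m a (m b y)) (m b y) = m a (m b y)" using assms by (metis s3 mA clm)
  finally show ?thesis by simp
qed

abbreviation E where "E t \<equiv> ev p m (\<lambda>a. a) t"

lemma E_in[simp]: "vs t \<subseteq> C \<Longrightarrow> E t \<in> C"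
  by (induction t) auto

lemma A1: "Uf t = {} \<Longrightarrow> vs t \<subseteq> C \<Longrightarrow> x \<in> Tf t \<Longrightarrow> p x (E t) = E t"
proof (induction t)
  case (V a) then show ?case by (simp add: pI)
next
  case (Pl t1 t2)
  show ?case
  proof (cases "x \<in> Tf t1")
    case True
    with Pl have "p x (E t1) = E t1" by auto
    moreover have "x \<in> C" using Pl.prems True vs_UT[of t1] by auto
    ultimately show ?thesis using Pl by (metis pA E_in le_sup_iff ev.simps(2) vs.simps(2))
  next
    case False
    with Pl have "p x (E t2) = E t2" by auto
    moreover have "x \<in> C" using Pl.prems False vs_UT[of t2] by auto
    ultimately show ?thesis using Pl by (metis pLC E_in le_sup_iff ev.simps(2) vs.simps(2))
  qed
next
  case (Tm t1 t2) then show ?case using vs_ne by auto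
qed

lemma A2: "Uf t = {} \<Longrightarrow> vs t \<subseteq> C \<Longrightarrow> y \<in> C \<Longrightarrow> \<forall>x\<in>Tf t. p x y = y \<Longrightarrow> p (E t) y = y"
proof (induction t)
  case (V a) then show ?case by simp
next
  case (Pl t1 t2)
  then have "p (E t1) y = y" "p (E t2) y = y" by auto
  then show ?case using Pl by (simp add: pA)
next
  case (Tm t1 t2) then show ?case using vs_ne by auto
qed

lemma A: assumes "Uf t1 = {}" "Uf t2 = {}" "Tf t1 = Tf t2" "vs t1 \<subseteq> C" "vs t2 \<subseteq> C"
  shows "E t1 = E t2"
proof -
  have "p (E t2) (E t1) = E t1"
    using assms by (intro A2) (auto intro: A1)
  moreover have "p (E t1) (E t2) = E t2"
    using assms by (intro A2) (auto intro: A1[of t2])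
  ultimately show ?thesis using assms by (metis pC E_in)
qed

lemma Pfl: "vs P \<subseteq> C \<Longrightarrow> y \<in> C \<Longrightarrow> m (E P) y = m (E (fl P)) y"
proof (induction P arbitrary: y)
  case (V x) then show ?case by simp
next
  case (Pl P1 P2) then show ?case by (simp add: dR fl_props)
next
  case (Tm P1 P2)
  have c: "vs P1 \<subseteq> C" "vs P2 \<subseteq> C" "vs (fl P1) \<subseteq> C" "vs (fl P2) \<subseteq> C"
    using Tm.prems by (auto simp: fl_props)
  have "m (E (Tm P1 P2)) y = m (E P1) (m (E P2) y)" using c Tm.prems by (simp add: mA)
  also have "\<dots> = m (E (fl P1)) (m (E (fl P2)) y)" using c Tm by simp
  also have "\<dots> = m (E (fl (Tm P1 P2))) y" using c Tm.prems by (simp add: K)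
  finally show ?case .
qed

lemma Pind: "vs P = vs P' \<Longrightarrow> vs P \<subseteq> C \<Longrightarrow> y \<in> C \<Longrightarrow> m (E P) y = m (E P') y"
proof -
  assume a: "vs P = vs P'" "vs P \<subseteq> C" "y \<in> C"
  have "Tf (fl P) = vs P" "Tf (fl P') = vs P'"
    using vs_UT[of "fl P"] fl_props[of P] vs_UT[of "fl P'"] fl_props[of P'] by simp_all
  then have "E (fl P) = E (fl P')"
    using a by (intro A) (auto simp: fl_props)
  then show ?thesis using a Pfl[of P y] Pfl[of P' y] by simp
qed

lemma alg1:
  assumes c: "a1 \<in> C" "a2 \<in> C" "q1 \<in> C" "q2 \<in> C"
  shows "p (m a1 q1) (m a2 q2) = m (p a1 a2) (p q1 q2)"
proof -
  define X where "X = m a1 q1"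
  define Y where "Y = m a2 q2"
  define Z12 where "Z12 = m a1 q2"
  define Z21 where "Z21 = m a2 q1"
  have cc: "X \<in> C" "Y \<in> C" "Z12 \<in> C" "Z21 \<in> C" using c by (simp_all add: X_def Y_def Z12_def Z21_def)
  have "p Y X = p (m a1 Y) X" using c unfolding X_def Y_def by (simp add: s4)
  also have "m a1 Y = p Z12 Y" unfolding Y_def Z12_def using c by (simp add: K dR)
  finally have i: "p X Y = p Z12 (p X Y)" using cc by (metis pA pC)
  have "p X Y = p (m a2 X) Y" using c unfolding X_def Y_def by (simp add: s4)
  also have "m a2 X = p Z21 X" unfolding X_def Z21_def using c
    by (metis K dR pC)
  finally have ii: "p X Y = p Z21 (p X Y)" using cc by (metis pA pC)
  have "m (p a1 a2) (p q1 q2) = p (m a1 (p q1 q2)) (m a2 (p q1 q2))"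
    using c by (simp add: dR)
  also have "\<dots> = p (p X Z12) (p Z21 Y)"
    using c by (simp add: dL X_def Y_def Z12_def Z21_def)
  also have "\<dots> = p Z12 (p Z21 (p X Y))" using cc by (simp add: pACI)
  also have "\<dots> = p X Y" using i ii by simp
  finally show ?thesis unfolding X_def Y_def by simp
qed

lemma main:
  "vs t \<subseteq> C \<Longrightarrow> Uf t \<noteq> {} \<Longrightarrow> vs P = Uf t \<Longrightarrow> Uf Q = {} \<Longrightarrow> Tf Q = Tf t
   \<Longrightarrow> E t = m (E P) (E Q)"
proof (induction t arbitrary: P Q)
  case (V x) then show ?case by simp
next
  case (Pl t1 t2)
  have vQ: "vs Q = Tf Q" using Pl.prems vs_UT[of Q] by simp
  have c1: "vs t1 \<subseteq> C" "vs t2 \<subseteq> C" using Pl.prems by auto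
  have cP: "vs P \<subseteq> C" using Pl.prems vs_UT[of t1] vs_UT[of t2] by auto
  have cQ: "vs Q \<subseteq> C" using Pl.prems vQ vs_UT[of t1] vs_UT[of t2] by auto
  obtain Q1 where Q1: "Uf Q1 = {}" "vs Q1 = Tf t1"
    using ex_flat[of "Tf t1"] Tf_ne[of t1] finite_subset[OF _ fin_vs[of t1]] vs_UT[of t1] by auto
  obtain Q2 where Q2: "Uf Q2 = {}" "vs Q2 = Tf t2"
    using ex_flat[of "Tf t2"] Tf_ne[of t2] finite_subset[OF _ fin_vs[of t2]] vs_UT[of t2] by auto
  have TQ1: "Tf Q1 = Tf t1" using Q1 vs_UT[of Q1] by simp
  have TQ2: "Tf Q2 = Tf t2" using Q2 vs_UT[of Q2] by simp
  have cQ12: "vs Q1 \<subseteq> C" "vs Q2 \<subseteq> C" using Q1 Q2 c1 vs_UT[of t1] vs_UT[of t2] by auto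
  have EQ: "E Q = p (E Q1) (E Q2)"
    using A[of Q "Pl Q1 Q2"] Pl.prems Q1 Q2 TQ1 TQ2 cQ cQ12 by simp
  show ?case
  proof (cases "Uf t1 = {}")
    case u1: True
    then have u2: "Uf t2 \<noteq> {}" using Pl.prems by simp
    have e1: "E t1 = E Q1" using A[of t1 Q1] u1 Q1 TQ1 c1 cQ12 by simp
    have e2: "E t2 = m (E P) (E Q2)" using Pl.IH(2)[of P Q2] Pl.prems u1 u2 Q2 TQ2 c1 by simp
    have "E (Pl t1 t2) = p (E Q1) (m (E P) (E Q2))" using e1 e2 by simp
    also have "\<dots> = p (m (E P) (E Q1)) (m (E P) (E Q2))" using cP cQ12 by (simp add: s4)
    also have "\<dots> = m (E P) (E Q)" using EQ cP cQ12 by (simp add: dL)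
    finally show ?thesis .
  next
    case u1: False
    show ?thesis
    proof (cases "Uf t2 = {}")
      case u2: True
      have e2: "E t2 = E Q2" using A[of t2 Q2] u2 Q2 TQ2 c1 cQ12 by simp
      have e1: "E t1 = m (E P) (E Q1)" using Pl.IH(1)[of P Q1] Pl.prems u1 u2 Q1 TQ1 c1 by simp
      have "E (Pl t1 t2) = p (m (E P) (E Q1)) (E Q2)" using e1 e2 by simp
      also have "\<dots> = p (E Q2) (m (E P) (E Q1))" using cP cQ12 by (simp add: pC)
      also have "\<dots> = p (m (E P) (E Q2)) (m (E P) (E Q1))" using cP cQ12 by (simp add: s4)
      also have "\<dots> = m (E P) (E Q)" using EQ cP cQ12 by (simp add: dL pC)
      finally show ?thesis .
    next
      case u2: False
      obtain P1 where P1: "Uf P1 = {}" "vs P1 = Uf t1"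
        using ex_flat[of "Uf t1"] u1 finite_subset[OF _ fin_vs[of t1]] vs_UT[of t1] by auto
      obtain P2 where P2: "Uf P2 = {}" "vs P2 = Uf t2"
        using ex_flat[of "Uf t2"] u2 finite_subset[OF _ fin_vs[of t2]] vs_UT[of t2] by auto
      have cP12: "vs P1 \<subseteq> C" "vs P2 \<subseteq> C" using P1 P2 c1 vs_UT[of t1] vs_UT[of t2] by auto
      have e1: "E t1 = m (E P1) (E Q1)" using Pl.IH(1)[of P1 Q1] u1 P1 Q1 TQ1 c1 by simp
      have e2: "E t2 = m (E P2) (E Q2)" using Pl.IH(2)[of P2 Q2] u2 P2 Q2 TQ2 c1 by simp
      have "E (Pl t1 t2) = m (p (E P1) (E P2)) (p (E Q1) (E Q2))"
        using e1 e2 cP12 cQ12 by (simp add: alg1)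
      also have "\<dots> = m (E (Pl P1 P2)) (E Q)" using EQ by simp
      also have "\<dots> = m (E P) (E Q)"
        using Pind[of "Pl P1 P2" P "E Q"] P1 P2 Pl.prems cP12 cQ by simp
      finally show ?thesis .
    qed
  qed
next
  case (Tm t1 t2)
  have vQ: "vs Q = Tf Q" using Tm.prems vs_UT[of Q] by simp
  have c1: "vs t1 \<subseteq> C" "vs t2 \<subseteq> C" using Tm.prems by auto
  have cQ: "vs Q \<subseteq> C" using Tm.prems vQ vs_UT[of t2] by auto
  show ?case
  proof (cases "Uf t2 = {}")
    case u2: True
    have e2: "E t2 = E Q" using A[of t2 Q] u2 Tm.prems c1 cQ by simp
    show ?thesis using e2 Pind[of t1 P "E Q"] Tm.prems u2 c1 cQ by simp
  next
    case u2: False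
    obtain P2 where P2: "Uf P2 = {}" "vs P2 = Uf t2"
      using ex_flat[of "Uf t2"] u2 finite_subset[OF _ fin_vs[of t2]] vs_UT[of t2] by auto
    have cP2: "vs P2 \<subseteq> C" using P2 c1 vs_UT[of t2] by auto
    have e2: "E t2 = m (E P2) (E Q)" using Tm.IH(2)[of P2 Q] u2 P2 Tm.prems c1 by simp
    have "E (Tm t1 t2) = m (E t1) (m (E P2) (E Q))" using e2 by simp
    also have "\<dots> = m (E (Pl t1 P2)) (E Q)" using c1 cP2 cQ by (simp add: K)
    also have "\<dots> = m (E P) (E Q)"
      using Pind[of "Pl t1 P2" P "E Q"] P2 Tm.prems c1 cP2 cQ by simp
    finally show ?thesis .
  qed
qed

lemma key:
  assumes "vs t1 \<subseteq> C" "vs t2 \<subseteq> C" "Uf t1 = Uf t2" "Tf t1 = Tf t2"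
  shows "E t1 = E t2"
proof (cases "Uf t1 = {}")
  case True
  then show ?thesis using assms by (intro A) auto
next
  case False
  obtain P where P: "Uf P = {}" "vs P = Uf t1"
    using ex_flat[of "Uf t1"] False finite_subset[OF _ fin_vs[of t1]] vs_UT[of t1] by auto
  obtain Q where Q: "Uf Q = {}" "vs Q = Tf t1"
    using ex_flat[of "Tf t1"] Tf_ne[of t1] finite_subset[OF _ fin_vs[of t1]] vs_UT[of t1] by auto
  have TQ: "Tf Q = Tf t1" using Q vs_UT[of Q] by simp
  show ?thesis using main[of t1 P Q] main[of t2 P Q] assms False P Q TQ by simp
qed

end

section \<open>The power algebra\<close>

lemma S4_ids:
  assumes "a \<in> S4_car" "b \<in> S4_car" "c \<in> S4_car"
  shows "S4_add (S4_add a b) c = S4_add a (S4_add b c) \<and>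
    S4_add a b = S4_add b a \<and> S4_add a a = a \<and>
    S4_mul (S4_mul a b) c = S4_mul a (S4_mul b c) \<and>
    S4_mul a (S4_add b c) = S4_add (S4_mul a b) (S4_mul a c) \<and>
    S4_mul (S4_add a b) c = S4_add (S4_mul a c) (S4_mul b c) \<and>
    S4_mul (S4_mul a a) b = S4_mul a b \<and>
    S4_mul (S4_mul a b) c = S4_mul (S4_mul b a) c \<and>
    S4_mul a b = S4_add (S4_mul a b) b \<and>
    S4_add a (S4_mul b c) = S4_add (S4_mul b a) (S4_mul b c)"
  using S4_ids0 assms by blast

lemma pow_ids:
  assumes "f \<in> pow_car" "g \<in> pow_car" "k \<in> pow_car"
  shows "pow_add (pow_add f g) k = pow_add f (pow_add g k)"
    "pow_add f g = pow_add g f" "pow_add f f = f"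
    "pow_mul (pow_mul f g) k = pow_mul f (pow_mul g k)"
    "pow_mul f (pow_add g k) = pow_add (pow_mul f g) (pow_mul f k)"
    "pow_mul (pow_add f g) k = pow_add (pow_mul f k) (pow_mul g k)"
    "pow_mul (pow_mul f f) g = pow_mul f g"
    "pow_mul (pow_mul f g) k = pow_mul (pow_mul g f) k"
    "pow_mul f g = pow_add (pow_mul f g) g"
    "pow_add f (pow_mul g k) = pow_add (pow_mul g f) (pow_mul g k)"
proof -
  have H: "\<And>x. S4_add (S4_add (f x) (g x)) (k x) = S4_add (f x) (S4_add (g x) (k x)) \<and>
    S4_add (f x) (g x) = S4_add (g x) (f x) \<and> S4_add (f x) (f x) = f x \<and>
    S4_mul (S4_mul (f x) (g x)) (k x) = S4_mul (f x) (S4_mul (g x) (k x)) \<and>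
    S4_mul (f x) (S4_add (g x) (k x)) = S4_add (S4_mul (f x) (g x)) (S4_mul (f x) (k x)) \<and>
    S4_mul (S4_add (f x) (g x)) (k x) = S4_add (S4_mul (f x) (k x)) (S4_mul (g x) (k x)) \<and>
    S4_mul (S4_mul (f x) (f x)) (g x) = S4_mul (f x) (g x) \<and>
    S4_mul (S4_mul (f x) (g x)) (k x) = S4_mul (S4_mul (g x) (f x)) (k x) \<and>
    S4_mul (f x) (g x) = S4_add (S4_mul (f x) (g x)) (g x) \<and>
    S4_add (f x) (S4_mul (g x) (k x)) = S4_add (S4_mul (g x) (f x)) (S4_mul (g x) (k x))"
  proof -
    fix x
    have "f x \<in> S4_car" "g x \<in> S4_car" "k x \<in> S4_car" using assms unfolding pow_car_def by auto
    then show "?thesis x" by (rule S4_ids)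
  qed
  show "pow_add (pow_add f g) k = pow_add f (pow_add g k)"
    "pow_add f g = pow_add g f" "pow_add f f = f"
    "pow_mul (pow_mul f g) k = pow_mul f (pow_mul g k)"
    "pow_mul f (pow_add g k) = pow_add (pow_mul f g) (pow_mul f k)"
    "pow_mul (pow_add f g) k = pow_add (pow_mul f k) (pow_mul g k)"
    "pow_mul (pow_mul f f) g = pow_mul f g"
    "pow_mul (pow_mul f g) k = pow_mul (pow_mul g f) k"
    "pow_mul f g = pow_add (pow_mul f g) g"
    "pow_add f (pow_mul g k) = pow_add (pow_mul g f) (pow_mul g k)"
    unfolding pow_add_def pow_mul_def
    by (rule ext, use H in blast)+
qed

lemma dir1:
  assumes W: "HSP_witness B h C p m"
  shows "ai_semiring C p m \<and> sat_Sigma C p m"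
proof -
  have Bp: "\<And>f. f \<in> B \<Longrightarrow> f \<in> pow_car" using W unfolding HSP_witness_def by blast
  have clB: "\<And>f g. f \<in> B \<Longrightarrow> g \<in> B \<Longrightarrow> pow_add f g \<in> B \<and> pow_mul f g \<in> B"
    using W unfolding HSP_witness_def by blast
  have img: "h ` B = C" using W unfolding HSP_witness_def by blast
  have hp: "\<And>f g. f \<in> B \<Longrightarrow> g \<in> B \<Longrightarrow> h (pow_add f g) = p (h f) (h g)"
    using W unfolding HSP_witness_def by blast
  have hm: "\<And>f g. f \<in> B \<Longrightarrow> g \<in> B \<Longrightarrow> h (pow_mul f g) = m (h f) (h g)"
    using W unfolding HSP_witness_def by blast
  have sur: "\<And>x. x \<in> C \<Longrightarrow> \<exists>f\<in>B. x = h f" using img by blast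
  have hB: "\<And>f. f \<in> B \<Longrightarrow> h f \<in> C" using img by blast
  have ids: "\<And>f g k. f \<in> B \<Longrightarrow> g \<in> B \<Longrightarrow> k \<in> B \<Longrightarrow>
     p (p (h f) (h g)) (h k) = p (h f) (p (h g) (h k)) \<and>
     p (h f) (h g) = p (h g) (h f) \<and> p (h f) (h f) = h f \<and>
     m (m (h f) (h g)) (h k) = m (h f) (m (h g) (h k)) \<and>
     m (h f) (p (h g) (h k)) = p (m (h f) (h g)) (m (h f) (h k)) \<and>
     m (p (h f) (h g)) (h k) = p (m (h f) (h k)) (m (h g) (h k)) \<and>
     m (m (h f) (h f)) (h g) = m (h f) (h g) \<and>
     m (m (h f) (h g)) (h k) = m (m (h g) (h f)) (h k) \<and>
     m (h f) (h g) = p (m (h f) (h g)) (h g) \<and>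
     p (h f) (m (h g) (h k)) = p (m (h g) (h f)) (m (h g) (h k))"
  proof -
    fix f g k assume fgk: "f \<in> B" "g \<in> B" "k \<in> B"
    note P = pow_ids[OF Bp[OF fgk(1)] Bp[OF fgk(2)] Bp[OF fgk(3)]]
    note hh = hp[symmetric] hm[symmetric]
    have c: "pow_add f g \<in> B" "pow_mul f g \<in> B" "pow_add g k \<in> B" "pow_mul g k \<in> B"
      "pow_mul f k \<in> B" "pow_mul g f \<in> B" "pow_mul f f \<in> B" "pow_add g f \<in> B"
      using clB fgk by auto
    show "?thesis f g k"
      apply (intro conjI)
      subgoal using fgk c by (simp add: hh P(1))
      subgoal using fgk c by (simp add: hh P(2))
      subgoal using fgk c by (simp add: hh P(3))
      subgoal using fgk c by (simp add: hh P(4) clB)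
      subgoal using fgk c by (simp add: hh P(5) clB)
      subgoal using fgk c by (simp add: hh P(6) clB)
      subgoal using fgk c by (simp add: hh P(7) clB)
      subgoal using fgk c by (simp add: hh P(8) clB)
      subgoal using fgk c by (simp add: hh clB) (rule arg_cong[where f=h], rule P(9))
      subgoal using fgk c by (simp add: hh P(10) clB)
      done
  qed
  have l1: "\<And>Q. (\<And>f. f \<in> B \<Longrightarrow> Q (h f)) \<Longrightarrow> \<forall>x\<in>C. Q x"
    using img by blast
  have l2: "\<And>Q. (\<And>f g. f \<in> B \<Longrightarrow> g \<in> B \<Longrightarrow> Q (h f) (h g)) \<Longrightarrow> \<forall>x\<in>C. \<forall>y\<in>C. Q x y"
    using img by blast
  have l3: "\<And>Q. (\<And>f g k. f \<in> B \<Longrightarrow> g \<in> B \<Longrightarrow> k \<in> B \<Longrightarrow> Q (h f) (h g) (h k))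
     \<Longrightarrow> \<forall>x\<in>C. \<forall>y\<in>C. \<forall>z\<in>C. Q x y z"
    using img by blast
  show ?thesis
    unfolding ai_semiring_def sat_Sigma_def
    apply (intro conjI)
    subgoal by (rule l2) (metis hp hm clB hB)
    subgoal by (rule l3) (use ids in blast)
    subgoal by (rule l2) (use ids in blast)
    subgoal by (rule l1) (use ids in blast)
    subgoal by (rule l3) (use ids in blast)
    subgoal by (rule l3) (use ids in blast)
    subgoal by (rule l3) (use ids in blast)
    subgoal by (rule l2) (use ids in blast)
    subgoal by (rule l3) (use ids in blast)
    subgoal by (rule l2) (use ids in blast)
    subgoal by (rule l3) (use ids in blast)
    done
qed

definition nrm :: "nat \<Rightarrow> nat" where "nrm x = (if x \<in> S4_car then x else 2)"

definition evB :: "'a trm \<Rightarrow> ('a \<Rightarrow> nat) \<Rightarrow> nat" where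
  "evB t = ev pow_add pow_mul (\<lambda>a \<phi>. nrm (\<phi> a)) t"

lemma evB_pt: "evB t \<phi> = ev S4_add S4_mul (\<lambda>a. nrm (\<phi> a)) t"
  unfolding evB_def by (induction t) (simp_all add: pow_add_def pow_mul_def)

lemma ev_S4_in: "(\<And>a. s a \<in> S4_car) \<Longrightarrow> ev S4_add S4_mul s t \<in> S4_car"
  by (induction t) (simp_all add: S4_cl)

lemma evB_car: "evB t \<in> pow_car"
proof -
  have "evB t \<phi> \<in> S4_car" for \<phi>
  proof -
    have "nrm (\<phi> a) \<in> S4_car" for a by (simp add: nrm_def S4_car_def)
    then show ?thesis unfolding evB_pt by (rule ev_S4_in)
  qed
  then show ?thesis unfolding pow_car_def by simp
qed

lemma evB_sep: "evB t1 = evB t2 \<Longrightarrow> Uf t1 = Uf t2 \<and> Tf t1 = Tf t2"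
proof -
  assume e: "evB t1 = evB t2"
  have n: "\<And>u. (\<lambda>a. nrm (if a = u then 4 else 2)) = (\<lambda>a. if a = u then 4 else 2)"
    by (auto simp: nrm_def S4_car_def)
  show ?thesis
  proof (rule sep)
    fix u
    have "evB t1 (\<lambda>a. if a = u then 4 else 2) = evB t2 (\<lambda>a. if a = u then 4 else 2)" using e by simp
    then show "ev S4_add S4_mul (\<lambda>a. if a = u then 4 else 2) t1 = ev S4_add S4_mul (\<lambda>a. if a = u then 4 else 2) t2"
      unfolding evB_pt n .
  qed
qed

lemma evB_simps: "evB (Pl t1 t2) = pow_add (evB t1) (evB t2)" "evB (Tm t1 t2) = pow_mul (evB t1) (evB t2)"
  unfolding evB_def by simp_all

lemma dir2:
  fixes C :: "'a set" and p m :: "'a \<Rightarrow> 'a \<Rightarrow> 'a"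
  assumes "ai_semiring C p m" "sat_Sigma C p m"
  shows "\<exists>(B :: (('a \<Rightarrow> nat) \<Rightarrow> nat) set) h. HSP_witness B h C p m"
proof -
  interpret SM C p m using assms by unfold_locales
  define B :: "(('a \<Rightarrow> nat) \<Rightarrow> nat) set" where "B = evB ` {t. vs t \<subseteq> C}"
  define h where "h f = E (SOME t. vs t \<subseteq> C \<and> evB t = f)" for f
  have hE: "h (evB t) = E t" if "vs t \<subseteq> C" for t
  proof -
    have ex: "\<exists>t'. vs t' \<subseteq> C \<and> evB t' = evB t" using that by blast
    define t' where "t' = (SOME t'. vs t' \<subseteq> C \<and> evB t' = evB t)"
    have t': "vs t' \<subseteq> C" "evB t' = evB t" using someI_ex[OF ex] unfolding t'_def by auto
    have "E t' = E t" using key[of t' t] t' that evB_sep[OF t'(2)] by simp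
    then show ?thesis unfolding h_def t'_def[symmetric] .
  qed
  have "HSP_witness B h C p m"
    unfolding HSP_witness_def
  proof (intro conjI ballI)
    show "B \<subseteq> pow_car" unfolding B_def using evB_car by auto
  next
    fix f g assume "f \<in> B" "g \<in> B"
    then obtain t1 t2 where t: "vs t1 \<subseteq> C" "vs t2 \<subseteq> C" "f = evB t1" "g = evB t2"
      unfolding B_def by auto
    have pl: "vs (Pl t1 t2) \<subseteq> C" "vs (Tm t1 t2) \<subseteq> C" using t by auto
    show "pow_add f g \<in> B" unfolding B_def using t pl evB_simps(1)[of t1 t2] by (metis image_eqI mem_Collect_eq)
    show "pow_mul f g \<in> B" unfolding B_def using t pl evB_simps(2)[of t1 t2] by (metis image_eqI mem_Collect_eq)
    show "h (pow_add f g) = p (h f) (h g)"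
      using hE[OF pl(1)] hE[OF t(1)] hE[OF t(2)] t by (simp add: evB_simps)
    show "h (pow_mul f g) = m (h f) (h g)"
      using hE[OF pl(2)] hE[OF t(1)] hE[OF t(2)] t by (simp add: evB_simps)
  next
    show "h ` B = C"
    proof
      show "h ` B \<subseteq> C" unfolding B_def using hE by auto
      show "C \<subseteq> h ` B"
      proof
        fix c assume c: "c \<in> C"
        have "h (evB (V c)) = c" using hE[of "V c"] c by simp
        moreover have "evB (V c) \<in> B" unfolding B_def using c by auto
        ultimately show "c \<in> h ` B" by (metis image_eqI)
      qed
    qed
  qed
  then show ?thesis by blast
qed

theorem proposition3p2:
  fixes C :: "'a set" and p m :: "'a \<Rightarrow> 'a \<Rightarrow> 'a"
  shows "(\<forall>(B :: ('i \<Rightarrow> nat) set) h. HSP_witness B h C p m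
            \<longrightarrow> ai_semiring C p m \<and> sat_Sigma C p m)
       \<and> (ai_semiring C p m \<and> sat_Sigma C p m
            \<longrightarrow> (\<exists>(B :: (('a \<Rightarrow> nat) \<Rightarrow> nat) set) h. HSP_witness B h C p m))"
  using dir1 dir2 by blast

end
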